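(* For every $x>1$, $1-[R^-(x)]^2<[R^+(x)]^2-1$. Consequently, for every $c>1$ and every $\sin^{-1}(\frac1c)\le\psi_1<\psi_2\le\pi-\sin^{-1}(\frac1c)$, \[\int_{\psi_1}^{\psi_2}\frac{d\psi}{1-[R^-(c\sin\psi)]^2}>\int_{\psi_1}^{\psi_2}\frac{d\psi}{[R^+(c\sin\psi)]^2-1}.\]
   Context: Let $K(R)=\frac{\exp(\frac{R^2-1}{2})}{R}$ for $R>0$; $K$ is strictly decreasing on $(0,1]$, strictly increasing on $[1,\infty)$ with $K(1)=1$. For $s\ge1$ let $R^-(s)\in(0,1]$ and $R^+(s)\in[1,\infty)$ be the two solutions of $K(R)=s$. *)

theory Defs
  imports "HOL-Analysis.Analysis"
begin

definition K :: "real \<Rightarrow> real" where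
  "K R = exp ((R\<^sup>2 - 1) / 2) / R"

text \<open>For s \<ge> 1: the two solutions of K R = s, one in (0,1], one in [1,\<infinity>).\<close>
definition Rminus :: "real \<Rightarrow> real" where
  "Rminus s = (THE R. 0 < R \<and> R \<le> 1 \<and> K R = s)"

definition Rplus :: "real \<Rightarrow> real" where
  "Rplus s = (THE R. 1 \<le> R \<and> K R = s)"

end

theory Submission
  imports Defs
begin


definition G :: "real \<Rightarrow> real" where "G u = u - 1 - ln u"

lemma K_pos: "R > 0 \<Longrightarrow> K R > 0" by (simp add: K_def)

lemma ln_K: "R > 0 \<Longrightarrow> 2 * ln (K R) = G (R\<^sup>2)"
  by (simp add: K_def G_def ln_div ln_realpow field_simps)

lemma isCont_K: "R > 0 \<Longrightarrow> isCont K R"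
  unfolding K_def by (intro continuous_intros) auto

lemma G_deriv: "u > 0 \<Longrightarrow> DERIV G u :> 1 - 1/u"
  unfolding G_def by (auto intro!: derivative_eq_intros)

lemma G_cont: "0 < a \<Longrightarrow> continuous_on {a..b} G"
  unfolding G_def by (intro continuous_intros) auto

lemma G_dec: assumes "0 < u" "u < v" "v \<le> 1" shows "G v < G u"
proof (rule DERIV_neg_imp_decreasing_open[of u v G])
  fix x assume "u < x" "x < v"
  then have "DERIV G x :> 1 - 1/x" "1 - 1/x < 0" using assms G_deriv by (auto simp: field_simps)
  then show "\<exists>y. DERIV G x :> y \<and> y < 0" by blast
qed (use assms G_cont in auto)

lemma G_inc: assumes "1 \<le> u" "u < v" shows "G u < G v"
proof (rule DERIV_pos_imp_increasing_open[of u v G])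
  fix x assume "u < x" "x < v"
  then have "DERIV G x :> 1 - 1/x" "1 - 1/x > 0" using assms G_deriv by (auto simp: field_simps)
  then show "\<exists>y. DERIV G x :> y \<and> y > 0" by blast
qed (use assms G_cont in auto)

lemma K_dec: assumes "0 < R" "R < R'" "R' \<le> 1" shows "K R' < K R"
proof -
  have "G (R'\<^sup>2) < G (R\<^sup>2)"
    using assms by (intro G_dec) (auto intro: power_strict_mono power_le_one)
  moreover have "2 * ln (K R') = G (R'\<^sup>2)" "2 * ln (K R) = G (R\<^sup>2)" using ln_K assms by auto
  ultimately have "ln (K R') < ln (K R)" by linarith
  thus ?thesis using K_pos assms by simp
qed

lemma K_inc: assumes "1 \<le> R" "R < R'" shows "K R < K R'"
proof -
  have "G (R\<^sup>2) < G (R'\<^sup>2)"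
    using assms by (intro G_inc) (auto intro: power_strict_mono one_le_power)
  moreover have "2 * ln (K R') = G (R'\<^sup>2)" "2 * ln (K R) = G (R\<^sup>2)" using ln_K assms by auto
  ultimately have "ln (K R) < ln (K R')" by linarith
  thus ?thesis using K_pos assms by simp
qed

lemma K_one: "K 1 = 1" by (simp add: K_def)

lemma Rminus_ex: assumes "s \<ge> 1" shows "\<exists>R. 0 < R \<and> R \<le> 1 \<and> K R = s"
proof -
  define r where "r = exp (-1/2) / s"
  have r0: "r > 0" using assms by (simp add: r_def)
  have "exp (-1/2) \<le> (1::real)" by simp
  then have "exp (-1/2) \<le> s" using assms by linarith
  then have r1: "r \<le> 1" using assms unfolding r_def by (simp add: divide_le_eq)
  have "exp (-1/2) \<le> exp ((r\<^sup>2 - 1)/2)" using r0 by simp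
  then have "s \<le> K r" using r0 assms unfolding K_def r_def
    by (simp add: field_simps)
  then obtain x where "r \<le> x" "x \<le> 1" "K x = s"
    using IVT2[of K 1 s r] r1 assms K_one isCont_K r0 by force
  thus ?thesis using r0 by (intro exI[of _ x]) auto
qed

lemma Rplus_ex: assumes "s \<ge> 1" shows "\<exists>R. 1 \<le> R \<and> K R = s"
proof -
  define r where "r = 2 * s"
  have r1: "r \<ge> 1" using assms by (simp add: r_def)
  have "1 + (r\<^sup>2 - 1)/2 \<le> exp ((r\<^sup>2 - 1)/2)" by (rule exp_ge_add_one_self)
  moreover have "s * r \<le> 1 + (r\<^sup>2 - 1)/2" unfolding r_def
    by (simp add: power2_eq_square field_simps)
  ultimately have "s \<le> K r" using r1 unfolding K_def by (simp add: field_simps)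
  then obtain x where "1 \<le> x" "x \<le> r" "K x = s"
    using IVT[of K 1 s r] r1 assms K_one isCont_K by force
  thus ?thesis by auto
qed

lemma Rminus_prop: assumes "s \<ge> 1" shows "0 < Rminus s \<and> Rminus s \<le> 1 \<and> K (Rminus s) = s"
proof -
  obtain R where R: "0 < R \<and> R \<le> 1 \<and> K R = s" using Rminus_ex[OF assms] by blast
  have "\<And>R'. 0 < R' \<and> R' \<le> 1 \<and> K R' = s \<Longrightarrow> R' = R"
  proof -
    fix R' assume a: "0 < R' \<and> R' \<le> 1 \<and> K R' = s"
    show "R' = R"
    proof (rule ccontr)
      assume "R' \<noteq> R"
      then consider "R' < R" | "R < R'" by linarith
      then show False
      proof cases
        case 1 then have "K R < K R' \<or> K R' < K R" using K_dec[of R' R] a R by blast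
        then show ?thesis using a R by linarith
      next
        case 2 then have "K R' < K R \<or> K R < K R'" using K_dec[of R R'] a R by blast
        then show ?thesis using a R by linarith
      qed
    qed
  qed
  note uniq = this
  have "Rminus s = R" unfolding Rminus_def
    apply (rule the_equality)
    using R apply blast
    using uniq apply blast
    done
  thus ?thesis using R by simp
qed

lemma Rplus_prop: assumes "s \<ge> 1" shows "1 \<le> Rplus s \<and> K (Rplus s) = s"
proof -
  obtain R where R: "1 \<le> R \<and> K R = s" using Rplus_ex[OF assms] by blast
  have "\<And>R'. 1 \<le> R' \<and> K R' = s \<Longrightarrow> R' = R"
  proof -
    fix R' assume a: "1 \<le> R' \<and> K R' = s"
    show "R' = R"
    proof (rule ccontr)
      assume "R' \<noteq> R"
      then consider "R' < R" | "R < R'" by linarith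
      then show False
      proof cases
        case 1 then have "K R < K R' \<or> K R' < K R" using K_inc[of R' R] a R by blast
        then show ?thesis using a R by linarith
      next
        case 2 then have "K R' < K R \<or> K R < K R'" using K_inc[of R R'] a R by blast
        then show ?thesis using a R by linarith
      qed
    qed
  qed
  note uniq = this
  have "Rplus s = R" unfolding Rplus_def
    apply (rule the_equality)
    using R apply blast
    using uniq apply blast
    done
  thus ?thesis using R by simp
qed

lemma Rminus_K: "0 < R \<Longrightarrow> R \<le> 1 \<Longrightarrow> Rminus (K R) = R"
proof -
  assume a: "0 < R" "R \<le> 1"
  have "K R \<ge> 1"
  proof (cases "R = 1")
    case True then show ?thesis using K_one by simp
  next
    case False then have "K 1 < K R" using K_dec[of R 1] a by linarith
    then show ?thesis using K_one by linarith
  qed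
  then have p: "0 < Rminus (K R) \<and> Rminus (K R) \<le> 1 \<and> K (Rminus (K R)) = K R" by (rule Rminus_prop)
  show ?thesis
  proof (rule ccontr)
    assume "Rminus (K R) \<noteq> R"
    then consider "Rminus (K R) < R" | "R < Rminus (K R)" by linarith
    then show False
    proof cases
      case 1 then have "K R < K (Rminus (K R)) \<or> K (Rminus (K R)) < K R" using K_dec[of "Rminus (K R)" R] a p by blast
        then show ?thesis using a p by linarith
    next
      case 2 then have "K (Rminus (K R)) < K R \<or> K R < K (Rminus (K R))" using K_dec[of R "Rminus (K R)"] a p by blast
        then show ?thesis using a p by linarith
    qed
  qed
qed

lemma Rplus_K: "1 \<le> R \<Longrightarrow> Rplus (K R) = R"
proof -
  assume a: "1 \<le> R"
  have "K R \<ge> 1"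
  proof (cases "R = 1")
    case True then show ?thesis using K_one by simp
  next
    case False then have "K 1 < K R" using K_inc[of 1 R] a by linarith
    then show ?thesis using K_one by linarith
  qed
  then have p: "1 \<le> Rplus (K R) \<and> K (Rplus (K R)) = K R" by (rule Rplus_prop)
  show ?thesis
  proof (rule ccontr)
    assume "Rplus (K R) \<noteq> R"
    then consider "Rplus (K R) < R" | "R < Rplus (K R)" by linarith
    then show False
    proof cases
      case 1 then have "K R < K (Rplus (K R)) \<or> K (Rplus (K R)) < K R" using K_inc[of "Rplus (K R)" R] a p by blast
        then show ?thesis using a p by linarith
    next
      case 2 then have "K (Rplus (K R)) < K R \<or> K R < K (Rplus (K R))" using K_inc[of R "Rplus (K R)"] a p by blast
        then show ?thesis using a p by linarith
    qed
  qed
qed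

lemma Rminus_lt1: assumes "s > 1" shows "Rminus s < 1"
proof -
  have p: "0 < Rminus s \<and> Rminus s \<le> 1 \<and> K (Rminus s) = s" using Rminus_prop[of s] assms by simp
  show ?thesis
  proof (rule ccontr)
    assume "\<not> ?thesis"
    then have "Rminus s = 1" using p by simp
    then show False using p K_one assms by simp
  qed
qed
lemma Rplus_gt1: assumes "s > 1" shows "Rplus s > 1"
proof -
  have p: "1 \<le> Rplus s \<and> K (Rplus s) = s" using Rplus_prop[of s] assms by simp
  show ?thesis
  proof (rule ccontr)
    assume "\<not> ?thesis"
    then have "Rplus s = 1" using p by simp
    then show False using p K_one assms by simp
  qed
qed



lemma H: assumes "0 < p" "p < 1" shows "G (2 - p) < G p"
proof -
  define h where "h x = G x - G (2 - x)" for x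
  have d: "DERIV h x :> (1 - 1/x) - (1 - 1/(2-x)) * -1" if "0 < x" "x < 2" for x :: real
  proof -
    have d1: "DERIV (\<lambda>x. 2 - x) x :> -1" by (auto intro!: derivative_eq_intros)
    have d2: "DERIV G (2-x) :> 1 - 1/(2-x)" using G_deriv that by simp
    have d3: "DERIV (\<lambda>x. G (2 - x)) x :> (1 - 1/(2-x)) * -1" using DERIV_chain2[OF d2 d1] .
    have d4: "DERIV G x :> 1 - 1/x" using G_deriv that by simp
    show ?thesis unfolding h_def using DERIV_diff[OF d4 d3] .
  qed
  have neg: "(1 - 1/x) - (1 - 1/(2-x)) * -1 < 0" if "0 < x" "x < 1" for x :: real
  proof -
    have "(1 - x)^2 > 0" using that by simp
    then have xx: "x * (2 - x) < 1" by (simp add: power2_eq_square algebra_simps)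
    have p2: "0 < 2 - x" using that by simp
    have e: "1/x + 1/(2-x) = 2 / (x * (2 - x))" using that p2 by (simp add: field_simps)
    have "2 < 2 / (x * (2 - x))" using xx that p2 by (simp add: less_divide_eq)
    then show ?thesis using e by (simp add: algebra_simps)
  qed
  have c: "continuous_on {p..1} h" unfolding h_def G_def using assms
    by (intro continuous_intros) auto
  have "h 1 < h p"
  proof (rule DERIV_neg_imp_decreasing_open[of p 1 h])
    fix x :: real assume x: "p < x" "x < 1"
    then have "DERIV h x :> (1 - 1/x) - (1 - 1/(2-x)) * -1" "(1 - 1/x) - (1 - 1/(2-x)) * -1 < 0"
      using d neg assms by auto
    then show "\<exists>y. DERIV h x :> y \<and> y < 0" by blast
  qed (use assms c in auto)
  thus ?thesis unfolding h_def by simp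
qed

lemma part1: assumes "x > 1" shows "1 - (Rminus x)\<^sup>2 < (Rplus x)\<^sup>2 - 1"
proof -
  define a b where "a = Rminus x" "b = Rplus x"
  have a: "0 < a" "a < 1" "K a = x" using Rminus_prop[of x] Rminus_lt1[of x] assms a_b_def by auto
  have b: "1 < b" "K b = x" using Rplus_prop[of x] Rplus_gt1[of x] assms a_b_def by auto
  have p: "0 < a\<^sup>2" "a\<^sup>2 < 1" using a power_strict_mono[of a 1 2] by auto
  have q: "1 < b\<^sup>2" using b by (simp add: one_less_power)
  have e: "G (a\<^sup>2) = G (b\<^sup>2)" using ln_K[of a] ln_K[of b] a b by simp
  have "b\<^sup>2 > 2 - a\<^sup>2"
  proof (rule ccontr)
    assume "\<not> ?thesis"
    then have "G (b\<^sup>2) \<le> G (2 - a\<^sup>2)" using G_inc[of "b\<^sup>2" "2 - a\<^sup>2"] q by force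
    thus False using H[OF p] e by simp
  qed
  thus ?thesis using a_b_def by simp
qed

lemma boundR: assumes "s > 1" shows "1 / (1 - (Rminus s)\<^sup>2) \<le> 2 + 1 / sqrt (ln s)"
proof -
  define a where "a = Rminus s"
  have a: "0 < a" "a < 1" "K a = s" using Rminus_prop[of s] Rminus_lt1[of s] assms a_def by auto
  define t where "t = 1 - a\<^sup>2"
  have t: "0 < t" "t < 1" using a power_strict_mono[of a 1 2] unfolding t_def by auto
  have ls: "ln s > 0" using assms by simp
  have G: "G (1 - t) = 2 * ln s" using ln_K[of a] a t_def by simp
  show ?thesis
  proof (cases "t \<le> 1/2")
    case True
    have "- t - 2 * t\<^sup>2 \<le> ln (1 - t)" using ln_one_minus_pos_lower_bound[of t] t True by simp
    then have "2 * ln s \<le> 2 * t\<^sup>2" using G unfolding G_def by simp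
    then have "ln s \<le> t\<^sup>2" by simp
    then have "sqrt (ln s) \<le> sqrt (t\<^sup>2)" by (rule real_sqrt_le_mono)
    then have "sqrt (ln s) \<le> t" using t by simp
    moreover have "0 < t * sqrt (ln s)" using ls t by simp
    ultimately have "1 / t \<le> 1 / sqrt (ln s)" by (intro divide_left_mono) auto
    then have h: "1 / (1 - (Rminus s)\<^sup>2) \<le> 1 / sqrt (ln s)" using t_def a_def by simp
    have "0 \<le> 1 / sqrt (ln s)" using ls by simp
    then show ?thesis using h by linarith
  next
    case False
    then have "1 / t \<le> 2" using t by (simp add: field_simps)
    then have h: "1 / (1 - (Rminus s)\<^sup>2) \<le> 2" using t_def a_def by simp
    have "0 \<le> 1 / sqrt (ln s)" using ls by simp
    then show ?thesis using h by linarith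
  qed
qed

lemma cos_lb: "cos (y::real) \<ge> 1 - y\<^sup>2 / 2"
proof -
  have "cos y = 1 - 2 * (sin (y/2))\<^sup>2" using cos_double_sin[of "y/2"] by simp
  moreover have "\<bar>sin (y/2)\<bar> \<le> \<bar>y/2\<bar>" by (rule abs_sin_x_le_abs_x)
  then have "\<bar>sin (y/2)\<bar>\<^sup>2 \<le> \<bar>y/2\<bar>\<^sup>2" by (rule power_mono) simp
  then have "(sin (y/2))\<^sup>2 \<le> (y/2)\<^sup>2" by (simp only: power2_abs)
  ultimately show ?thesis by (simp add: power_divide)
qed

lemma sin_lb3: fixes y :: real assumes "0 \<le> y" shows "sin y \<ge> y - y^3/6"
proof -
  define g where "g x = sin x - x + x^3/6" for x :: real
  have "g 0 \<le> g y"
  proof (rule DERIV_nonneg_imp_increasing_open[OF assms])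
    fix x :: real assume "0 < x" "x < y"
    have "DERIV g x :> cos x - 1 + (3 * x^2) / 6" unfolding g_def
      by (rule derivative_eq_intros refl | simp)+
    moreover have "cos x - 1 + (3 * x^2)/6 \<ge> 0" using cos_lb[of x] by simp
    ultimately show "\<exists>d. DERIV g x :> d \<and> d \<ge> 0" by blast
  next
    show "continuous_on {0..y} g" unfolding g_def by (intro continuous_intros) auto
  qed
  thus ?thesis by (simp add: g_def)
qed

lemma sin_lb: fixes y :: real assumes "0 \<le> y" "y \<le> pi/2" shows "sin y \<ge> y / 3"
proof -
  have "y < 2" using assms pi_less_4 by linarith
  then have "y^2 \<le> 2^2" using assms power_mono[of y 2 2] by simp
  then have "y^2 \<le> 4" by simp
  then have "y * y^2 \<le> y * 4" using assms by (intro mult_left_mono) auto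
  moreover have "y^3 = y * y^2" by (simp add: power3_eq_cube power2_eq_square)
  ultimately have "y^3 / 6 \<le> y * 4 / 6" by simp
  then show ?thesis using sin_lb3[OF assms(1)] by linarith
qed

lemma sin_diff_lb:
  fixes al x :: real
  assumes "0 \<le> al" "al \<le> pi/2" "al \<le> x" "x \<le> pi - al"
  shows "sin x - sin al \<ge> (x - al) * (pi - al - x) / 18"
proof -
  have a1: "pi/2 - (x + al)/2 = (pi - al - x)/2" by (simp add: field_simps)
  have "cos ((x + al)/2) = sin ((pi - al - x)/2)" using cos_sin_eq[of "(x + al)/2"] a1 by simp
  then have e: "sin x - sin al = 2 * sin ((x - al)/2) * sin ((pi - al - x)/2)"
    using sin_diff_sin[of x al] by simp
  have s1: "sin ((x - al)/2) \<ge> (x - al)/6" using sin_lb[of "(x-al)/2"] assms by simp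
  have s2: "sin ((pi - al - x)/2) \<ge> (pi - al - x)/6" using sin_lb[of "(pi-al-x)/2"] assms by simp
  have "(x - al)/6 * ((pi - al - x)/6) \<le> sin ((x - al)/2) * sin ((pi - al - x)/2)"
    using s1 s2 assms by (intro mult_mono) auto
  thus ?thesis using e by simp
qed



lemma isCont_Rminus: assumes "s > 1" shows "isCont Rminus s"
proof -
  define x where "x = Rminus s"
  have x: "0 < x" "x < 1" "K x = s" using Rminus_prop[of s] Rminus_lt1[of s] assms x_def by auto
  define d where "d = min (x/2) ((1-x)/2)"
  have "isCont Rminus (K x)"
  proof (rule isCont_inverse_function[where d=d and f=K and x=x])
    show "0 < d" using x d_def by simp
    fix z assume "\<bar>z - x\<bar> \<le> d"
    then have "z - x \<le> d" "x - z \<le> d" by auto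
    moreover have "d \<le> x/2" "d \<le> (1-x)/2" unfolding d_def by (auto simp: min_def)
    ultimately have "2 * x - 2 * z \<le> x" by (simp add: field_simps)
    then have z1: "0 < z" using x by linarith
    have "2 * z \<le> 2 * x + (1-x)" using \<open>z - x \<le> d\<close> \<open>d \<le> (1-x)/2\<close> by (simp add: field_simps)
    then have z2: "z < 1" using x by linarith
    note z = z1 z2
    show "Rminus (K z) = z" using Rminus_K z by simp
    show "isCont K z" using isCont_K z by simp
  qed
  thus ?thesis using x by simp
qed

lemma isCont_Rplus: assumes "s > 1" shows "isCont Rplus s"
proof -
  define x where "x = Rplus s"
  have x: "1 < x" "K x = s" using Rplus_prop[of s] Rplus_gt1[of s] assms x_def by auto
  define d where "d = (x-1)/2"
  have "isCont Rplus (K x)"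
  proof (rule isCont_inverse_function[where d=d and f=K and x=x])
    show "0 < d" using x d_def by simp
    fix z assume "\<bar>z - x\<bar> \<le> d"
    then have "x - z \<le> d" by auto
    then have "2*x - 2*z \<le> x - 1" unfolding d_def by simp
    then have z: "1 < z" using x by linarith
    show "Rplus (K z) = z" using Rplus_K z by simp
    show "isCont K z" using isCont_K z by simp
  qed
  thus ?thesis using x by simp
qed

lemma integ_w:
  fixes al be :: real
  assumes "al < be"
  shows "set_integrable lborel {al<..<be} (\<lambda>x. 1 / sqrt ((x - al) * (be - x)))"
proof -
  define F where "F x = arcsin ((2*x - al - be) / (be - al))" for x
  have cF: "continuous_on {al..be} F" unfolding F_def using assms
    by (intro continuous_intros) (auto simp: field_simps)
  have "set_integrable lborel (einterval (ereal al) (ereal be)) (\<lambda>x. 1 / sqrt ((x - al) * (be - x)))"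
  proof (rule interval_integral_FTC_nonneg(1)[where F=F and A="F al" and B="F be"])
    show "ereal al < ereal be" using assms by simp
  next
    fix x assume "ereal al < ereal x" "ereal x < ereal be"
    then have x: "al < x" "x < be" by auto
    define u where "u = (2*x - al - be) / (be - al)"
    have u: "-1 < u" "u < 1" using x unfolding u_def by (auto simp: field_simps)
    define P where "P = (x - al) * (be - x)"
    have P0: "P > 0" using x unfolding P_def by simp
    have num: "(be-al)\<^sup>2 - (2*x-al-be)\<^sup>2 = 4 * P" unfolding P_def by (simp add: power2_eq_square algebra_simps)
    have B: "(be-al)\<^sup>2 \<noteq> 0" using x by simp
    have u2: "u\<^sup>2 = (2*x-al-be)\<^sup>2/(be-al)\<^sup>2" unfolding u_def by (rule power_divide)
    have "((be-al)\<^sup>2 - (2*x-al-be)\<^sup>2) / (be-al)\<^sup>2 = (be-al)\<^sup>2/(be-al)\<^sup>2 - (2*x-al-be)\<^sup>2/(be-al)\<^sup>2"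
      by (rule diff_divide_distrib)
    also have "\<dots> = 1 - u\<^sup>2" using B u2 by simp
    finally have "1 - u\<^sup>2 = ((be-al)\<^sup>2 - (2*x-al-be)\<^sup>2) / (be-al)\<^sup>2" by simp
    also have "\<dots> = 4 * P / (be-al)\<^sup>2" using num by simp
    also have "\<dots> = (2 * sqrt P / (be - al))\<^sup>2" using P0 by (simp add: power_divide power_mult_distrib)
    finally have sq: "1 - u\<^sup>2 = (2 * sqrt ((x - al) * (be - x)) / (be - al))\<^sup>2" unfolding P_def .
    have pos: "0 \<le> 2 * sqrt ((x - al) * (be - x)) / (be - al)" using x by simp
    have d0: "DERIV (\<lambda>x. 2*x - al - be) x :> 2"
      by (auto intro!: derivative_eq_intros)
    have d1: "DERIV (\<lambda>x. (2*x - al - be) / (be - al)) x :> 2 / (be - al)"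
      using DERIV_cdivide[OF d0, of "be - al"] .
    have d2: "DERIV arcsin ((2*x - al - be) / (be - al)) :> inverse (sqrt (1 - u\<^sup>2))"
      using DERIV_arcsin[OF u] unfolding u_def .
    have "DERIV F x :> inverse (sqrt (1 - u\<^sup>2)) * (2 / (be - al))"
      unfolding F_def using DERIV_chain2[OF d2 d1] .
    moreover have "inverse (sqrt (1 - u\<^sup>2)) * (2 / (be - al)) = 1 / sqrt ((x - al) * (be - x))"
    proof -
      have sS: "sqrt (1 - u\<^sup>2) = 2 * sqrt P / (be - al)"
        unfolding P_def using real_sqrt_unique[OF sq[symmetric] pos] .
      have sP: "sqrt P > 0" using P0 by simp
      have "inverse (sqrt (1 - u\<^sup>2)) * (2 / (be - al)) = 1 / sqrt P"
        unfolding sS using sP x by (simp add: field_simps)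
      then show ?thesis unfolding P_def .
    qed
    ultimately show "DERIV F x :> 1 / sqrt ((x - al) * (be - x))" by simp
  next
    fix x assume "ereal al < ereal x" "ereal x < ereal be"
    then have x: "al < x" "x < be" by auto
    show "isCont (\<lambda>x. 1 / sqrt ((x - al) * (be - x))) x" using x
      by (intro continuous_intros) auto
  next
    show "AE x in lborel. ereal al < ereal x \<longrightarrow> ereal x < ereal be \<longrightarrow> 0 \<le> 1 / sqrt ((x - al) * (be - x))"
      by (intro AE_I2) auto
  next
    show "((F \<circ> real_of_ereal) \<longlongrightarrow> F al) (at_right (ereal al))"
      unfolding ereal_tendsto_simps1 using continuous_on_Icc_at_rightD[OF cF assms] .
    show "((F \<circ> real_of_ereal) \<longlongrightarrow> F be) (at_left (ereal be))"
      unfolding ereal_tendsto_simps1 using continuous_on_Icc_at_leftD[OF cF assms] .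
  qed
  thus ?thesis by simp
qed



lemma set_int_pos:
  fixes h :: "real \<Rightarrow> real"
  assumes ab: "a < b" and int: "set_integrable lborel {a<..<b} h" and pos: "\<And>x. a < x \<Longrightarrow> x < b \<Longrightarrow> h x > 0"
  shows "(LINT x:{a<..<b}|lborel. h x) > 0"
proof -
  define F where "F x = indicator {a<..<b} x *\<^sub>R h x" for x
  have iF: "integrable lborel F" using int unfolding set_integrable_def F_def .
  have nn: "AE x in lborel. 0 \<le> F x" unfolding F_def using pos
    by (intro AE_I2) (auto simp: indicator_def less_imp_le)
  have ge: "integral\<^sup>L lborel F \<ge> 0" using nn by (rule integral_nonneg_AE)
  have "integral\<^sup>L lborel F \<noteq> 0"
  proof
    assume "integral\<^sup>L lborel F = 0"
    then have "AE x in lborel. F x = 0" using integral_nonneg_eq_0_iff_AE[OF iF nn] by simp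
    then have "AE x in lborel. x \<notin> {a<..<b}"
      by (rule AE_mp) (intro AE_I2, auto simp: F_def dest: pos)
    then have "emeasure lborel {a<..<b} = 0"
      by (subst (asm) AE_iff_measurable[of "{a<..<b}"]) auto
    thus False using ab by simp
  qed
  thus ?thesis using ge unfolding set_lebesgue_integral_def F_def by simp
qed

lemma meas_cont:
  fixes h :: "real \<Rightarrow> real"
  assumes "\<And>x. a < x \<Longrightarrow> x < b \<Longrightarrow> isCont h x"
  shows "set_borel_measurable lborel {a<..<b} h"
proof -
  have "continuous_on {a<..<b} h" using assms by (intro continuous_at_imp_continuous_on) auto
  then have "(\<lambda>x. indicator {a<..<b} x *\<^sub>R h x) \<in> borel_measurable borel"
    by (intro borel_measurable_continuous_on_indicator) auto
  then show ?thesis unfolding set_borel_measurable_def by simp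
qed

lemma part2:
  fixes c p1 p2 :: real
  assumes c: "c > 1" and h1: "arcsin (1 / c) \<le> p1" and h12: "p1 < p2" and h2: "p2 \<le> pi - arcsin (1 / c)"
  shows "(LBINT \<psi>=p1..p2. 1 / (1 - (Rminus (c * sin \<psi>))\<^sup>2))
           > (LBINT \<psi>=p1..p2. 1 / ((Rplus (c * sin \<psi>))\<^sup>2 - 1))"
proof -
  define al where "al = arcsin (1 / c)"
  define be where "be = pi - al"
  define f where "f \<psi> = 1 / (1 - (Rminus (c * sin \<psi>))\<^sup>2)" for \<psi>
  define g where "g \<psi> = 1 / ((Rplus (c * sin \<psi>))\<^sup>2 - 1)" for \<psi>
  define W where "W \<psi> = (\<psi> - al) * (be - \<psi>)" for \<psi>
  have c0: "0 < 1 / c" "1 / c < 1" using c by auto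
  have al0: "0 < al" unfolding al_def using arcsin_less_arcsin[of 0 "1/c"] c0 by simp
  have al2: "al < pi/2" unfolding al_def using arcsin_lt_bounded[of "1/c"] c0 by simp
  have sal: "sin al = 1 / c" unfolding al_def by (rule sin_arcsin) (use c0 in linarith)+
  have p1: "al \<le> p1" "p2 \<le> be" using h1 h2 unfolding al_def be_def by auto
  have key: "1 < c * sin x \<and> 0 < f x \<and> 0 < g x \<and> g x < f x \<and> f x \<le> 9 * (1 / sqrt (W x))"
    if x: "p1 < x" "x < p2" for x
  proof -
    have xa: "al < x" "x < be" using x p1 by auto
    have W0: "W x > 0" unfolding W_def using xa by simp
    have sd: "sin x - sin al \<ge> (x - al) * (pi - al - x) / 18"
      using sin_diff_lb[of al x] al0 al2 xa be_def by simp
    then have sd': "sin x - 1 / c \<ge> W x / 18" unfolding W_def be_def using sal by simp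
    define s where "s = c * sin x"
    have "s - 1 = c * (sin x - 1 / c)" unfolding s_def using c by (simp add: field_simps)
    moreover have "c * (sin x - 1 / c) > 0" using sd' W0 c by simp
    ultimately have s1: "s > 1" by simp
    have sc: "s \<le> c" unfolding s_def using c sin_le_one[of x] by simp
    have "ln (1 / s) \<le> 1 / s - 1" using s1 by (intro ln_le_minus_one) simp
    then have ls1: "ln s \<ge> (s - 1) / s" using s1 by (simp add: ln_div diff_divide_distrib)
    have "(s - 1) / c \<le> (s - 1) / s" using s1 sc by (intro divide_left_mono) auto
    moreover have "(s - 1) / c = sin x - 1 / c" unfolding s_def using c by (simp add: field_simps)
    ultimately have lsW: "ln s \<ge> W x / 18" using ls1 sd' by linarith
    have bR: "f x \<le> 2 + 1 / sqrt (ln s)" unfolding f_def s_def using boundR s1 s_def by simp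
    have "sqrt (W x / 18) \<le> sqrt (ln s)" using lsW by (rule real_sqrt_le_mono)
    moreover have "sqrt (W x / 18) > 0" using W0 by simp
    ultimately have "1 / sqrt (ln s) \<le> 1 / sqrt (W x / 18)" by (intro divide_left_mono) auto
    also have "1 / sqrt (W x / 18) = sqrt 18 * (1 / sqrt (W x))" by (simp add: real_sqrt_divide)
    also have "\<dots> \<le> 5 * (1 / sqrt (W x))"
    proof -
      have "sqrt 18 \<le> sqrt (5^2)" by (intro real_sqrt_le_mono) simp
      then have "sqrt 18 \<le> 5" by simp
      then show ?thesis using W0 by (intro mult_right_mono) auto
    qed
    finally have b1: "1 / sqrt (ln s) \<le> 5 * (1 / sqrt (W x))" .
    have "W x \<le> ((be - al) / 2)\<^sup>2"
    proof -
      have "0 \<le> ((x - al) - (be - x))\<^sup>2" by simp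
      then show ?thesis unfolding W_def by (simp add: power2_eq_square field_simps)
    qed
    moreover have "(be - al) / 2 < 2" unfolding be_def using al0 pi_less_4 by simp
    moreover have "0 \<le> (be - al) / 2" unfolding be_def using al2 by simp
    ultimately have "W x < 2\<^sup>2" using power_strict_mono[of "(be - al) / 2" 2 2] by simp
    then have "sqrt (W x) < sqrt (2\<^sup>2)" by (intro real_sqrt_less_mono)
    then have sW: "sqrt (W x) < 2" by simp
    have sW0: "sqrt (W x) > 0" using W0 by simp
    have "2 * sqrt (W x) \<le> 4" using sW by simp
    then have b2: "2 \<le> 4 * (1 / sqrt (W x))" using sW0 by (simp add: field_simps)
    have fb: "f x \<le> 9 * (1 / sqrt (W x))" using bR b1 b2 by simp
    have a1: "0 < Rminus s" "Rminus s < 1" using Rminus_prop[of s] Rminus_lt1[OF s1] s1 by auto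
    have "(Rminus s)\<^sup>2 < 1" using a1 power_strict_mono[of "Rminus s" 1 2] by simp
    then have fpos: "0 < 1 - (Rminus s)\<^sup>2" by simp
    have b1': "1 < Rplus s" using Rplus_gt1[OF s1] .
    have "1 < (Rplus s)\<^sup>2" using b1' power_strict_mono[of 1 "Rplus s" 2] by simp
    then have gpos: "0 < (Rplus s)\<^sup>2 - 1" by simp
    have P1: "1 - (Rminus s)\<^sup>2 < (Rplus s)\<^sup>2 - 1" using part1[OF s1] .
    have "0 < f x" unfolding f_def using fpos s_def by simp
    moreover have "0 < g x" unfolding g_def using gpos s_def by simp
    moreover have "g x < f x" unfolding f_def g_def using fpos P1 s_def
      by (simp add: divide_strict_left_mono)
    ultimately show ?thesis using s1 fb s_def by simp
  qed
  have contf: "isCont f x" if x: "p1 < x" "x < p2" for x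
  proof -
    have s1: "1 < c * sin x" using key[OF x] by simp
    have "isCont (\<lambda>\<psi>. c * sin \<psi>) x" by (intro continuous_intros)
    then have r: "isCont (\<lambda>\<psi>. Rminus (c * sin \<psi>)) x" using isCont_o2 isCont_Rminus[OF s1] by blast
    have a1: "Rminus (c * sin x) < 1" "0 < Rminus (c * sin x)" using Rminus_lt1[OF s1] Rminus_prop[of "c * sin x"] s1 by auto
    have "(Rminus (c * sin x))\<^sup>2 < 1" using a1 power_strict_mono[of "Rminus (c * sin x)" 1 2] by simp
    then have "1 - (Rminus (c * sin x))\<^sup>2 \<noteq> 0" by simp
    then show ?thesis unfolding f_def using r by (intro continuous_intros) auto
  qed
  have contg: "isCont g x" if x: "p1 < x" "x < p2" for x
  proof -
    have s1: "1 < c * sin x" using key[OF x] by simp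
    have "isCont (\<lambda>\<psi>. c * sin \<psi>) x" by (intro continuous_intros)
    then have r: "isCont (\<lambda>\<psi>. Rplus (c * sin \<psi>)) x" using isCont_o2 isCont_Rplus[OF s1] by blast
    have "1 < Rplus (c * sin x)" using Rplus_gt1[OF s1] .
    then have "1 < (Rplus (c * sin x))\<^sup>2" using power_strict_mono[of 1 "Rplus (c * sin x)" 2] by simp
    then have "(Rplus (c * sin x))\<^sup>2 - 1 \<noteq> 0" by simp
    then show ?thesis unfolding g_def using r by (intro continuous_intros) auto
  qed
  have alb: "al < be" using al2 unfolding be_def by simp
  have iW: "set_integrable lborel {al<..<be} (\<lambda>x. 9 * (1 / sqrt (W x)))"
    unfolding W_def using integ_w[OF alb] by (intro set_integrable_mult_right) auto
  have iW': "set_integrable lborel {p1<..<p2} (\<lambda>x. 9 * (1 / sqrt (W x)))"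
    using p1 by (intro set_integrable_subset[OF iW]) auto
  have mf: "set_borel_measurable lborel {p1<..<p2} f" using contf by (intro meas_cont)
  have mg: "set_borel_measurable lborel {p1<..<p2} g" using contg by (intro meas_cont)
  have if_: "set_integrable lborel {p1<..<p2} f"
  proof (rule set_integrable_bound[OF iW' mf])
    show "AE x in lborel. x \<in> {p1<..<p2} \<longrightarrow> norm (f x) \<le> norm (9 * (1 / sqrt (W x)))"
    proof (rule AE_I2, rule impI)
      fix x assume "x \<in> {p1<..<p2}"
      then have k: "0 < f x" "f x \<le> 9 * (1 / sqrt (W x))" using key[of x] by auto
      have e1: "norm (f x) = f x" using k(1) by simp
      have e2: "9 * (1 / sqrt (W x)) \<le> norm (9 * (1 / sqrt (W x)))" unfolding real_norm_def by (rule abs_ge_self)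
      show "norm (f x) \<le> norm (9 * (1 / sqrt (W x)))" using e1 e2 k(2) by linarith
    qed
  qed
  have ig: "set_integrable lborel {p1<..<p2} g"
  proof (rule set_integrable_bound[OF if_ mg])
    show "AE x in lborel. x \<in> {p1<..<p2} \<longrightarrow> norm (g x) \<le> norm (f x)"
    proof (rule AE_I2, rule impI)
      fix x assume "x \<in> {p1<..<p2}"
      then have k: "0 < g x" "g x < f x" using key[of x] by auto
      then show "norm (g x) \<le> norm (f x)" by simp
    qed
  qed
  have pos: "(LINT x:{p1<..<p2}|lborel. f x - g x) > 0"
    using h12 set_integral_diff(1)[OF if_ ig] key by (intro set_int_pos) auto
  have eqf: "(LBINT \<psi>=p1..p2. f \<psi>) = (LINT x:{p1<..<p2}|lborel. f x)"
    using h12 by (simp add: interval_lebesgue_integral_le_eq)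
  have eqg: "(LBINT \<psi>=p1..p2. g \<psi>) = (LINT x:{p1<..<p2}|lborel. g x)"
    using h12 by (simp add: interval_lebesgue_integral_le_eq)
  have "(LBINT \<psi>=p1..p2. f \<psi>) > (LBINT \<psi>=p1..p2. g \<psi>)"
    using pos set_integral_diff(2)[OF if_ ig] eqf eqg by simp
  then show ?thesis unfolding f_def g_def .
qed

theorem mainTheorem7:
  shows "(\<forall>x::real. x > 1 \<longrightarrow> 1 - (Rminus x)\<^sup>2 < (Rplus x)\<^sup>2 - 1)
    \<and> (\<forall>c \<psi>1 \<psi>2 :: real. c > 1 \<longrightarrow> arcsin (1 / c) \<le> \<psi>1 \<longrightarrow> \<psi>1 < \<psi>2
         \<longrightarrow> \<psi>2 \<le> pi - arcsin (1 / c) \<longrightarrow>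
         (LBINT \<psi>=\<psi>1..\<psi>2. 1 / (1 - (Rminus (c * sin \<psi>))\<^sup>2))
           > (LBINT \<psi>=\<psi>1..\<psi>2. 1 / ((Rplus (c * sin \<psi>))\<^sup>2 - 1)))"
  using part1 part2 by blast


end
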